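(* Consider the model $Y=X\beta+\varepsilon$, $X\in\mathbb{R}^{N\times D}$ with $N\ge D$, $\varepsilon\sim\mathcal{N}(0,\tau^{-1}I_N)$, $\tau>0$, and prior $\beta\sim\mathcal{N}(0,\Sigma_\beta)$ with $\Sigma_\beta$ positive definite. Let $X=V\,\mathrm{diag}(\lambda)U^\top+\bar V\,\mathrm{diag}(\bar\lambda)\bar U^\top$ be a singular value decomposition, where $[U,\bar U]\in\mathbb{R}^{D\times D}$ is orthogonal with $U\in\mathbb{R}^{D\times M}$, $[V,\bar V]\in\mathbb{R}^{N\times D}$ has orthonormal columns, $\lambda=(\lambda_1,\dots,\lambda_M)$, $\bar\lambda=(\bar\lambda_1,\dots,\bar\lambda_{D-M})$ and $\lambda_1\ge\dots\ge\lambda_M\ge\bar\lambda_1\ge\dots\ge\bar\lambda_{D-M}\ge0$. The exact posterior is $\mathcal{N}(\mu_N,\Sigma_N)$ with $\Sigma_N^{-1}=\Sigma_\beta^{-1}+\tau X^\top X$, $\mu_N=\tau\Sigma_NX^\top Y$, and the approximate posterior obtained by replacing $X$ by $XUU^\top$ is $\mathcal{N}(\tilde\mu_N,\tilde\Sigma_N)$ with $\tilde\Sigma_N^{-1}=\Sigma_\beta^{-1}+\tau UU^\top X^\top XUU^\top$, $\tilde\mu_N=\tau\tilde\Sigma_NUU^\top X^\top Y$. Then $$\|\mu_N-\tilde\mu_N\|_2\le\frac{\bar\lambda_1\big(\bar\lambda_1\|\bar U^\top\tilde\mu_N\|_2+\|\bar V^\top Y\|_2\big)}{\|\tau\Sigma_\beta\|_2^{-1}+\bar\lambda_{D-M}^2}$$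 and $\|\Sigma_N^{-1}-\tilde\Sigma_N^{-1}\|_2=\tau\bar\lambda_1^2$ (indeed $\Sigma_N^{-1}-\tilde\Sigma_N^{-1}=\tau\bar U\,\mathrm{diag}(\bar\lambda\odot\bar\lambda)\bar U^\top$).
   Context: $\|\cdot\|_2$ on matrices is the spectral norm; $\odot$ is componentwise multiplication. *)

theory Defs
  imports "HOL-Analysis.Analysis"
begin

definition spec_norm :: "real^'a^'b \<Rightarrow> real" where
  "spec_norm A = onorm (\<lambda>x. A *v x)"

definition diag_mat :: "real^'a \<Rightarrow> real^'a^'a" where
  "diag_mat v = (\<chi> i j. if i = j then v $ i else 0)"

definition pos_def :: "real^'a^'a \<Rightarrow> bool" where
  "pos_def S \<longleftrightarrow> transpose S = S \<and> (\<forall>x. x \<noteq> 0 \<longrightarrow> x \<bullet> (S *v x) > 0)"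

end

theory Submission
  imports Defs
begin

declare transpose_matrix_vector [simp del]

lemma dot_tr: "(A *v x) \<bullet> (y::real^_) = x \<bullet> (transpose A *v y)"
  by (metis dot_lmul_matrix inner_commute transpose_matrix_vector)

lemma ortho_cancel: "transpose A ** A = mat 1 \<Longrightarrow> transpose A *v (A *v z) = (z::real^_)"
  by (metis matrix_vector_mul_assoc matrix_vector_mul_lid)

lemma zero_cancel: "B ** A = 0 \<Longrightarrow> B *v (A *v z) = (0::real^_)"
  by (metis matrix_vector_mul_assoc matrix_vector_mult_0)

lemma transpose_zero: "transpose (0::real^'a^'b) = 0"
  by (simp add: transpose_def vec_eq_iff)

lemma tr_zero_swap: "transpose U ** W = (0::real^'a^'b) \<Longrightarrow> transpose W ** U = 0"
  by (metis matrix_transpose_mul transpose_transpose transpose_zero)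

lemma norm_iso: assumes "transpose A ** A = mat 1" shows "norm (A *v x) = norm (x::real^_)"
proof -
  have "norm (A *v x)^2 = norm x ^2"
    by (simp add: power2_norm_eq_inner dot_tr ortho_cancel[OF assms])
  then show ?thesis by (simp add: power2_eq_iff_nonneg)
qed

lemma norm_tr_le: assumes "transpose A ** A = mat 1" shows "norm (transpose A *v x) \<le> norm (x::real^_)"
proof -
  define w where "w = transpose A *v x"
  have "norm w ^2 = (A *v w) \<bullet> x" by (simp add: power2_norm_eq_inner dot_tr w_def)
  also have "\<dots> \<le> norm (A *v w) * norm x" by (rule Cauchy_Schwarz_ineq2[THEN order_trans[OF abs_ge_self]])
  also have "\<dots> = norm w * norm x" using norm_iso[OF assms] by simp
  finally have "norm w ^2 \<le> norm w * norm x" .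
  then show ?thesis unfolding w_def[symmetric]
    by (metis mult_le_cancel_left_pos norm_ge_zero power2_eq_square order_le_less mult_zero_left zero_less_norm_iff norm_zero)
qed

lemma transpose_diag: "transpose (diag_mat v) = diag_mat v"
  by (simp add: transpose_def diag_mat_def vec_eq_iff)

lemma diag_mv: "diag_mat v *v x = (\<chi> i. v$i * x$i)"
proof -
  have "(\<Sum>j\<in>UNIV. (if i = j then v $ i else 0) * x $ j) = (\<Sum>j\<in>UNIV. if i = j then v $ i * x $ j else 0)" for i
    by (rule sum.cong) auto
  then show ?thesis unfolding diag_mat_def matrix_vector_mult_def vec_eq_iff by simp
qed

lemma norm_sq_sum: "norm (x::real^'n)^2 = (\<Sum>i\<in>UNIV. (x$i)^2)"
  unfolding power2_norm_eq_inner inner_vec_def by (simp add: power2_eq_square)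

lemma norm_diag_le: assumes "\<And>i. \<bar>v$i\<bar> \<le> c" shows "norm (diag_mat v *v x) \<le> c * norm x"
proof -
  have c: "0 \<le> c" using assms[of undefined] by linarith
  have i: "(v $ i * x $ i)^2 \<le> c^2 * (x $ i)^2" for i
  proof -
    have "(v$i)^2 \<le> c^2" using assms[of i] c by (simp add: abs_le_square_iff[symmetric] )
    then show ?thesis by (simp add: power_mult_distrib mult_right_mono)
  qed
  have "norm (diag_mat v *v x)^2 = (\<Sum>i\<in>UNIV. (v $ i * x $ i)^2)"
    by (simp add: norm_sq_sum diag_mv)
  also have "\<dots> \<le> (\<Sum>i\<in>UNIV. c^2 * (x $ i)^2)" by (rule sum_mono[OF i])
  also have "\<dots> = (c * norm x)^2" by (simp add: norm_sq_sum power_mult_distrib sum_distrib_left)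
  finally show ?thesis by (rule power2_le_imp_le) (use c in simp)
qed

lemma norm_diag_ge: assumes "\<And>i. c \<le> \<bar>v$i\<bar>" "0 \<le> c" shows "c * norm x \<le> norm (diag_mat v *v x)"
proof -
  have i: "c^2 * (x $ i)^2 \<le> (v $ i * x $ i)^2" for i
  proof -
    have "c^2 \<le> (v$i)^2" using assms(1)[of i] assms(2) by (simp add: abs_le_square_iff[symmetric])
    then show ?thesis by (simp add: power_mult_distrib mult_right_mono)
  qed
  have "(c * norm x)^2 = (\<Sum>i\<in>UNIV. c^2 * (x $ i)^2)" by (simp add: norm_sq_sum power_mult_distrib sum_distrib_left)
  also have "\<dots> \<le> (\<Sum>i\<in>UNIV. (v $ i * x $ i)^2)" by (rule sum_mono[OF i])
  also have "\<dots> = norm (diag_mat v *v x)^2"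
    by (simp add: norm_sq_sum diag_mv)
  finally show ?thesis by (rule power2_le_imp_le) simp
qed


lemma spec_bound: "norm (A *v x) \<le> spec_norm A * norm x"
  unfolding spec_norm_def by (rule onorm) simp

lemma psd_cs:
  fixes S :: "real^'n^'n"
  assumes sym: "transpose S = S" and psd: "\<And>x. 0 \<le> x \<bullet> (S *v x)"
  shows "(u \<bullet> (S *v v))^2 \<le> (u \<bullet> (S *v u)) * (v \<bullet> (S *v v))"
proof -
  define a b c where "a = u \<bullet> (S *v u)" and "b = u \<bullet> (S *v v)" and "c = v \<bullet> (S *v v)"
  have sym2: "v \<bullet> (S *v u) = u \<bullet> (S *v v)" by (metis dot_tr inner_commute sym)
  have q: "0 \<le> a + 2*t*b + t^2*c" for t
  proof -
    have "0 \<le> (u + t *\<^sub>R v) \<bullet> (S *v (u + t *\<^sub>R v))" by (rule psd)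
    also have "\<dots> = a + 2*t*b + t^2*c"
      by (simp add: matrix_vector_right_distrib matrix_vector_mult_scaleR inner_add_left inner_add_right
          sym2 a_def b_def c_def algebra_simps power2_eq_square)
    finally show ?thesis .
  qed
  have c0: "0 \<le> c" unfolding c_def by (rule psd)
  have "b^2 \<le> a * c"
  proof (cases "c = 0")
    case True
    have "b = 0"
    proof (rule ccontr)
      assume "b \<noteq> 0"
      have "0 \<le> a + 2*(-(a+1)/(2*b))*b + (-(a+1)/(2*b))^2*c" by (rule q)
      also have "\<dots> = -1" using \<open>b \<noteq> 0\<close> True by (simp add: field_simps)
      finally show False by simp
    qed
    then show ?thesis using True by simp
  next
    case False
    then have cp: "0 < c" using c0 by simp
    have "0 \<le> a + 2*(-b/c)*b + (-b/c)^2*c" by (rule q)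
    also have "\<dots> = a - b^2/c" using cp by (simp add: field_simps power2_eq_square)
    finally have "b^2/c \<le> a" by simp
    then show ?thesis using cp by (simp add: pos_divide_le_eq mult.commute)
  qed
  then show ?thesis by (simp add: a_def b_def c_def)
qed

lemma inv_props: "invertible A \<Longrightarrow> A ** matrix_inv A = mat 1 \<and> matrix_inv A ** A = mat 1"
  unfolding invertible_def matrix_inv_def by (rule someI_ex)

lemma posq_invertible:
  fixes A :: "real^'n^'n"
  assumes "\<And>x. x \<noteq> 0 \<Longrightarrow> 0 < x \<bullet> (A *v x)" shows "invertible A"
proof -
  have "\<forall>x. A *v x = 0 \<longrightarrow> x = 0" using assms by fastforce
  then show ?thesis using matrix_left_invertible_ker invertible_left_inverse by blast
qed

lemma pd_bound:
  fixes S :: "real^'n^'n"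
  assumes pd: "pos_def S"
  shows "0 < spec_norm S" "invertible S" "norm x^2 \<le> spec_norm S * (x \<bullet> (matrix_inv S *v x))"
proof -
  have sym: "transpose S = S" and pos: "\<And>x. x \<noteq> 0 \<Longrightarrow> 0 < x \<bullet> (S *v x)"
    using pd unfolding pos_def_def by auto
  have psd: "0 \<le> x \<bullet> (S *v x)" for x using pos[of x] by (cases "x = 0") auto
  show inv: "invertible S" by (rule posq_invertible) (rule pos)
  have "S *v axis undefined 1 \<noteq> 0" using pos[of "axis undefined 1"] by (auto simp: axis_eq_0_iff)
  then show sp: "0 < spec_norm S" unfolding spec_norm_def
    by (subst onorm_pos_lt) auto
  define s where "s = spec_norm S"
  define y where "y = matrix_inv S *v x"
  have Sy: "S *v y = x" unfolding y_def using inv_props[OF inv]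
    by (metis matrix_vector_mul_assoc matrix_vector_mul_lid)
  have e1: "x \<bullet> (matrix_inv S *v x) = y \<bullet> (S *v y)"
    by (metis Sy y_def inner_commute)
  have e2: "y \<bullet> (S *v (S *v y)) = norm (S *v y)^2"
    by (metis dot_tr sym power2_norm_eq_inner)
  have "(y \<bullet> (S *v (S *v y)))^2 \<le> (y \<bullet> (S *v y)) * ((S *v y) \<bullet> (S *v (S *v y)))"
    by (rule psd_cs[OF sym psd])
  also have "(S *v y) \<bullet> (S *v (S *v y)) \<le> norm (S *v y) * (s * norm (S *v y))"
    using Cauchy_Schwarz_ineq2[of "S *v y" "S *v (S *v y)"] spec_bound[of S "S *v y"]
    unfolding s_def by (smt (verit) mult_left_mono norm_ge_zero)
  then have "(y \<bullet> (S *v y)) * ((S *v y) \<bullet> (S *v (S *v y))) \<le> (y \<bullet> (S *v y)) * (norm (S *v y) * (s * norm (S *v y)))"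
    using psd[of y] by (rule mult_left_mono)
  finally have "(norm (S *v y)^2)^2 \<le> (y \<bullet> (S *v y)) * s * norm (S *v y)^2"
    unfolding e2 by (simp add: power2_eq_square ac_simps)
  then have "norm (S *v y)^2 \<le> (y \<bullet> (S *v y)) * s"
    by (cases "norm (S *v y) = 0") (auto simp: power2_eq_square)
  then show "norm x^2 \<le> spec_norm S * (x \<bullet> (matrix_inv S *v x))"
    unfolding e1 Sy s_def by (simp add: mult.commute)
qed


lemma completion:
  fixes U :: "real^'m^'d" and W :: "real^'k^'d"
  assumes oU: "transpose U ** U = mat 1" and oW: "transpose W ** W = mat 1"
    and oUW: "transpose U ** W = 0" and card: "CARD('m) + CARD('k) = CARD('d)"
  shows "U *v (transpose U *v x) + W *v (transpose W *v x) = x"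
proof -
  have oWU: "transpose W ** U = 0" by (rule tr_zero_swap[OF oUW])
  define cu where "cu i = U *v axis i (1::real)" for i
  define cw where "cw j = W *v axis j (1::real)" for j
  have uu: "cu i \<bullet> cu i' = (if i = i' then 1 else 0)" for i i'
    unfolding cu_def dot_tr ortho_cancel[OF oU] inner_axis_axis by simp
  have ww: "cw i \<bullet> cw i' = (if i = i' then 1 else 0)" for i i'
    unfolding cw_def dot_tr ortho_cancel[OF oW] inner_axis_axis by simp
  have uw: "cu i \<bullet> cw j = 0" for i j
    unfolding cu_def cw_def dot_tr zero_cancel[OF oUW] by simp
  have injU: "inj cu" by (rule injI) (metis uu zero_neq_one)
  have injW: "inj cw" by (rule injI) (metis ww zero_neq_one)
  have disj: "range cu \<inter> range cw = {}"
    using uu uw by (auto) (metis zero_neq_one)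
  define S where "S = range cu \<union> range cw"
  have cardS: "card S = CARD('d)"
    unfolding S_def using disj card
    by (simp add: card_Un_disjoint card_image injU injW)
  have po: "pairwise orthogonal S"
    unfolding S_def pairwise_def orthogonal_def
    using uu ww uw by (auto simp: inner_commute)
  have n0: "0 \<notin> S" unfolding S_def using uu ww
    by (auto) (metis inner_zero_left zero_neq_one)+
  have ind: "independent S" by (rule pairwise_orthogonal_independent[OF po n0])
  have "UNIV \<subseteq> span S"
    by (rule card_ge_dim_independent[OF _ ind]) (simp_all add: cardS)
  then have xs: "x \<in> span S" by auto
  have lin: "linear (\<lambda>x. U *v (transpose U *v x) + W *v (transpose W *v x))"
    by (intro linear_compose_add linear_compose[of "\<lambda>x. transpose _ *v x" "\<lambda>x. _ *v x", unfolded o_def] matrix_vector_mul_linear)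
  have "(\<lambda>x. U *v (transpose U *v x) + W *v (transpose W *v x)) x = id x"
  proof (rule linear_eq_on_span[OF lin linear_id _ xs])
    fix b assume "b \<in> S"
    then show "U *v (transpose U *v b) + W *v (transpose W *v b) = id b"
      unfolding S_def cu_def cw_def
      by (auto simp: ortho_cancel[OF oU] ortho_cancel[OF oW] zero_cancel[OF oUW] zero_cancel[OF oWU])
  qed
  then show ?thesis by simp
qed


lemma transpose_add: "transpose (A + B) = transpose A + transpose (B::real^'a^'b)"
  by (simp add: transpose_def vec_eq_iff)

lemma scaleR_mv: "(c *\<^sub>R A) *v x = c *\<^sub>R (A *v (x::real^_))"
  by (simp add: scaleR_matrix_vector_assoc)

theorem mainTheorem3:
  fixes X :: "real^'d^'n" and Y :: "real^'n" and \<tau> :: real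
    and Sb :: "real^'d^'d"
    and U :: "real^'m::{finite,linorder}^'d" and Ub :: "real^'k::{finite,linorder}^'d"
    and V :: "real^'m::{finite,linorder}^'n" and Vb :: "real^'k::{finite,linorder}^'n"
    and lam :: "real^'m::{finite,linorder}" and lamb :: "real^'k::{finite,linorder}"
  assumes "CARD('d) \<le> CARD('n)"
    and "\<tau> > 0"
    and "pos_def Sb"
    and "CARD('m::{finite,linorder}) + CARD('k::{finite,linorder}) = CARD('d)"
    and "transpose U ** U = mat 1" and "transpose Ub ** Ub = mat 1" and "transpose U ** Ub = 0"
    and "transpose V ** V = mat 1" and "transpose Vb ** Vb = mat 1" and "transpose V ** Vb = 0"
    and "X = V ** diag_mat lam ** transpose U + Vb ** diag_mat lamb ** transpose Ub"
    and "\<And>i j. i \<le> j \<Longrightarrow> lam $ j \<le> lam $ i"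
    and "\<And>i j. i \<le> j \<Longrightarrow> lamb $ j \<le> lamb $ i"
    and "\<And>i j. lamb $ j \<le> lam $ i"
    and "\<And>j. 0 \<le> lamb $ j"
  shows "let P = matrix_inv Sb + \<tau> *\<^sub>R (transpose X ** X);
             SN = matrix_inv P;
             muN = \<tau> *\<^sub>R (SN *v (transpose X *v Y));
             UU = U ** transpose U;
             tP = matrix_inv Sb + \<tau> *\<^sub>R (UU ** transpose X ** X ** UU);
             tSN = matrix_inv tP;
             tmuN = \<tau> *\<^sub>R (tSN *v ((UU ** transpose X) *v Y));
             l1 = lamb $ (Min UNIV);
             lK = lamb $ (Max UNIV)
         in norm (muN - tmuN)
              \<le> l1 * (l1 * norm (transpose Ub *v tmuN) + norm (transpose Vb *v Y))
                 / (inverse (spec_norm (\<tau> *\<^sub>R Sb)) + lK ^ 2)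
          \<and> P - tP = \<tau> *\<^sub>R (Ub ** diag_mat (\<chi> j. lamb $ j * lamb $ j) ** transpose Ub)
          \<and> spec_norm (P - tP) = \<tau> * l1 ^ 2"
proof -
  note oU = assms(5) and oUb = assms(6) and oUUb = assms(7) and oV = assms(8) and oVb = assms(9)
    and oVVb = assms(10) and Xdef = assms(11)
  have oUbU: "transpose Ub ** U = 0" by (rule tr_zero_swap[OF oUUb])
  have oVbV: "transpose Vb ** V = 0" by (rule tr_zero_swap[OF oVVb])
  define Si where "Si = matrix_inv Sb"
  define DL where "DL = diag_mat lam"
  define DB where "DB = diag_mat lamb"
  define P where "P = Si + \<tau> *\<^sub>R (transpose X ** X)"
  define UU where "UU = U ** transpose U"
  define tP where "tP = Si + \<tau> *\<^sub>R (UU ** transpose X ** X ** UU)"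
  define SN where "SN = matrix_inv P"
  define tSN where "tSN = matrix_inv tP"
  define muN where "muN = \<tau> *\<^sub>R (SN *v (transpose X *v Y))"
  define tmuN where "tmuN = \<tau> *\<^sub>R (tSN *v ((UU ** transpose X) *v Y))"
  define l1 where "l1 = lamb $ (Min UNIV)"
  define lK where "lK = lamb $ (Max UNIV)"
  define s where "s = spec_norm Sb"
  have lamb_l1: "lamb $ j \<le> l1" for j unfolding l1_def by (rule assms(13)) simp
  have lK_lamb: "lK \<le> lamb $ j" for j unfolding lK_def by (rule assms(13)) simp
  have lK0: "0 \<le> lK" unfolding lK_def by (rule assms(15))
  have lK_lam: "lK \<le> lam $ i" for i unfolding lK_def by (rule assms(14))
  have l10: "0 \<le> l1" unfolding l1_def by (rule assms(15))
  have sp: "0 < s" and invSb: "invertible Sb" and Sib: "\<And>x. norm x^2 \<le> s * (x \<bullet> (Si *v x))"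
    using pd_bound[OF assms(3)] unfolding s_def Si_def by auto
  have Xv: "X *v x = V *v (DL *v (transpose U *v x)) + Vb *v (DB *v (transpose Ub *v x))" for x
    unfolding Xdef DL_def DB_def by (simp add: matrix_vector_mult_add_rdistrib matrix_vector_mul_assoc matrix_mul_assoc)
  have Xt: "transpose X = U ** DL ** transpose V + Ub ** DB ** transpose Vb"
    unfolding Xdef DL_def DB_def by (simp add: transpose_add matrix_transpose_mul transpose_diag matrix_mul_assoc)
  have Xtv: "transpose X *v y = U *v (DL *v (transpose V *v y)) + Ub *v (DB *v (transpose Vb *v y))" for y
    unfolding Xt by (simp add: matrix_vector_mult_add_rdistrib matrix_vector_mul_assoc matrix_mul_assoc)
  have XtXv: "(transpose X ** X) *v x = U *v (DL *v (DL *v (transpose U *v x))) + Ub *v (DB *v (DB *v (transpose Ub *v x)))" for x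
    by (simp add: matrix_vector_mul_assoc[symmetric] Xv Xtv matrix_vector_right_distrib
        ortho_cancel[OF oV] ortho_cancel[OF oVb] zero_cancel[OF oVVb] zero_cancel[OF oVbV])
  have UUv: "UU *v x = U *v (transpose U *v x)" for x unfolding UU_def by (simp add: matrix_vector_mul_assoc)
  have tXv: "(UU ** transpose X ** X ** UU) *v x = U *v (DL *v (DL *v (transpose U *v x)))" for x
    by (simp add: matrix_vector_mul_assoc[symmetric] UUv Xv Xtv matrix_vector_right_distrib
        ortho_cancel[OF oU] ortho_cancel[OF oV] ortho_cancel[OF oVb] zero_cancel[OF oVVb] zero_cancel[OF oVbV]
        zero_cancel[OF oUbU] zero_cancel[OF oUUb])
  have Pv: "P *v x = Si *v x + \<tau> *\<^sub>R (U *v (DL *v (DL *v (transpose U *v x))) + Ub *v (DB *v (DB *v (transpose Ub *v x))))" for x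
    unfolding P_def by (simp add: matrix_vector_mult_add_rdistrib scaleR_mv XtXv)
  have tPv: "tP *v x = Si *v x + \<tau> *\<^sub>R (U *v (DL *v (DL *v (transpose U *v x))))" for x
    unfolding tP_def by (simp add: matrix_vector_mult_add_rdistrib scaleR_mv tXv)
  have dv: "(P - tP) *v x = \<tau> *\<^sub>R (Ub *v (DB *v (DB *v (transpose Ub *v x))))" for x
    by (simp add: matrix_vector_mult_diff_rdistrib Pv tPv algebra_simps)
  have diag2: "diag_mat (\<chi> j. lamb $ j * lamb $ j) *v z = DB *v (DB *v z)" for z
    unfolding DB_def by (simp add: diag_mv vec_eq_iff mult.assoc)
  have claim2: "P - tP = \<tau> *\<^sub>R (Ub ** diag_mat (\<chi> j. lamb $ j * lamb $ j) ** transpose Ub)"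
    unfolding matrix_eq
    by (simp add: dv scaleR_mv matrix_vector_mul_assoc[symmetric] diag2)
  have dtr: "x \<bullet> (A *v w) = (transpose A *v x) \<bullet> w" for A :: "real^'q^'d" and x w
    by (metis dot_tr inner_commute)
  have dsq: "z \<bullet> (diag_mat v *v (diag_mat v *v z)) = norm (diag_mat v *v z)^2" for v z :: "real^'q"
    by (metis dot_tr transpose_diag power2_norm_eq_inner)
  have comp: "norm x^2 = norm (transpose U *v x)^2 + norm (transpose Ub *v x)^2" for x
  proof -
    have "norm x^2 = x \<bullet> (U *v (transpose U *v x) + Ub *v (transpose Ub *v x))"
      by (simp add: completion[OF oU oUb oUUb assms(4)] power2_norm_eq_inner)
    also have "\<dots> = norm (transpose U *v x)^2 + norm (transpose Ub *v x)^2"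
      by (simp add: inner_add_right dtr power2_norm_eq_inner)
    finally show ?thesis .
  qed
  have qX: "x \<bullet> (U *v (DL *v (DL *v (transpose U *v x))) + Ub *v (DB *v (DB *v (transpose Ub *v x))))
      = norm (DL *v (transpose U *v x))^2 + norm (DB *v (transpose Ub *v x))^2" for x
    unfolding DL_def DB_def by (simp add: inner_add_right dtr dsq)
  have qtX: "x \<bullet> (U *v (DL *v (DL *v (transpose U *v x)))) = norm (DL *v (transpose U *v x))^2" for x
    unfolding DL_def DB_def by (simp add: dtr dsq)
  have lowX: "lK^2 * norm x^2 \<le> norm (DL *v (transpose U *v x))^2 + norm (DB *v (transpose Ub *v x))^2" for x
  proof -
    have a: "lK * norm (transpose U *v x) \<le> norm (DL *v (transpose U *v x))"
      unfolding DL_def by (rule norm_diag_ge[OF _ lK0]) (metis lK_lam lK0 abs_of_nonneg order_trans)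
    have b: "lK * norm (transpose Ub *v x) \<le> norm (DB *v (transpose Ub *v x))"
      unfolding DB_def by (rule norm_diag_ge[OF _ lK0]) (metis lK_lamb lK0 abs_of_nonneg order_trans)
    have a2: "(lK * norm (transpose U *v x))^2 \<le> norm (DL *v (transpose U *v x))^2"
      using a lK0 by (intro power_mono) auto
    have b2: "(lK * norm (transpose Ub *v x))^2 \<le> norm (DB *v (transpose Ub *v x))^2"
      using b lK0 by (intro power_mono) auto
    show ?thesis using a2 b2 comp[of x] by (simp add: power_mult_distrib algebra_simps)
  qed
  define \<kappa> where "\<kappa> = 1 / s + \<tau> * lK^2"
  have kp: "0 < \<kappa>" unfolding \<kappa>_def using sp assms(2) by (simp add: add_pos_nonneg)
  have qP: "\<kappa> * norm x^2 \<le> x \<bullet> (P *v x)" for x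
  proof -
    have "norm x^2 / s \<le> x \<bullet> (Si *v x)" using Sib[of x] sp by (simp add: divide_le_eq mult.commute)
    moreover have "\<tau> * (lK^2 * norm x^2) \<le> \<tau> * (x \<bullet> (U *v (DL *v (DL *v (transpose U *v x))) + Ub *v (DB *v (DB *v (transpose Ub *v x)))))"
      using lowX[of x] qX[of x] assms(2) by simp
    ultimately show ?thesis unfolding Pv \<kappa>_def by (simp add: inner_add_right algebra_simps)
  qed
  have qtP: "norm x^2 / s \<le> x \<bullet> (tP *v x)" for x
  proof -
    have "norm x^2 / s \<le> x \<bullet> (Si *v x)" using Sib[of x] sp by (simp add: divide_le_eq mult.commute)
    moreover have "0 \<le> \<tau> * (x \<bullet> (U *v (DL *v (DL *v (transpose U *v x)))))"
      using qtX[of x] assms(2) by simp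
    ultimately show ?thesis unfolding tPv by (simp add: inner_add_right)
  qed
  have invP: "invertible P"
    by (rule posq_invertible) (metis qP kp mult_pos_pos zero_less_norm_iff zero_less_power order_less_le_trans)
  have invtP: "invertible tP"
    by (rule posq_invertible) (metis qtP sp divide_pos_pos zero_less_norm_iff zero_less_power order_less_le_trans)
  have PmuN: "P *v muN = \<tau> *\<^sub>R (transpose X *v Y)"
    unfolding muN_def SN_def using inv_props[OF invP]
    by (metis matrix_vector_mul_assoc matrix_vector_mul_lid matrix_vector_mult_scaleR)
  have tPtmuN: "tP *v tmuN = \<tau> *\<^sub>R (U *v (DL *v (transpose V *v Y)))"
  proof -
    have "tP *v tmuN = \<tau> *\<^sub>R ((UU ** transpose X) *v Y)"
      unfolding tmuN_def tSN_def using inv_props[OF invtP]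
      by (metis matrix_vector_mul_assoc matrix_vector_mul_lid matrix_vector_mult_scaleR)
    also have "(UU ** transpose X) *v Y = U *v (DL *v (transpose V *v Y))"
      by (simp add: matrix_vector_mul_assoc[symmetric] UUv Xtv matrix_vector_right_distrib
        ortho_cancel[OF oU] zero_cancel[OF oUUb])
    finally show ?thesis .
  qed
  define e where "e = muN - tmuN"
  define w where "w = transpose Vb *v Y - DB *v (transpose Ub *v tmuN)"
  have Pe: "P *v e = \<tau> *\<^sub>R (Ub *v (DB *v w))"
  proof -
    have "P *v tmuN = tP *v tmuN + (P - tP) *v tmuN" by (simp add: matrix_vector_mult_diff_rdistrib)
    then have "P *v e = \<tau> *\<^sub>R (transpose X *v Y) - tP *v tmuN - (P - tP) *v tmuN"
      unfolding e_def by (simp add: matrix_vector_mult_diff_distrib PmuN)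
    also have "\<dots> = \<tau> *\<^sub>R (Ub *v (DB *v w))"
      unfolding tPtmuN dv Xtv w_def by (simp add: matrix_vector_mult_diff_distrib algebra_simps)
    finally show ?thesis .
  qed
  have DBle: "norm (DB *v z) \<le> l1 * norm z" for z
    unfolding DB_def by (rule norm_diag_le) (metis lamb_l1 assms(15) abs_of_nonneg)
  have nPe: "norm (P *v e) \<le> \<tau> * (l1 * (l1 * norm (transpose Ub *v tmuN) + norm (transpose Vb *v Y)))"
  proof -
    have n1: "norm (P *v e) = \<tau> * norm (DB *v w)" using assms(2) by (simp add: Pe norm_iso[OF oUb])
    have a: "norm (DB *v w) \<le> l1 * norm w" by (rule DBle)
    have b: "norm w \<le> norm (transpose Vb *v Y) + norm (DB *v (transpose Ub *v tmuN))"
      unfolding w_def by (rule norm_triangle_ineq4)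
    have c: "norm (DB *v (transpose Ub *v tmuN)) \<le> l1 * norm (transpose Ub *v tmuN)" by (rule DBle)
    have "norm w \<le> l1 * norm (transpose Ub *v tmuN) + norm (transpose Vb *v Y)" using b c by linarith
    then have "norm (DB *v w) \<le> l1 * (l1 * norm (transpose Ub *v tmuN) + norm (transpose Vb *v Y))"
      using a mult_left_mono[OF _ l10] by (meson order_trans)
    then show ?thesis unfolding n1 using assms(2) by simp
  qed
  have ke: "\<kappa> * norm e \<le> norm (P *v e)"
  proof (cases "e = 0")
    case False
    have "\<kappa> * norm e^2 \<le> e \<bullet> (P *v e)" by (rule qP)
    also have "\<dots> \<le> norm e * norm (P *v e)" by (rule Cauchy_Schwarz_ineq2[THEN order_trans[OF abs_ge_self]])
    finally show ?thesis using False by (simp add: power2_eq_square)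
  qed simp
  have snt: "spec_norm (\<tau> *\<^sub>R Sb) = \<tau> * s"
  proof -
    have "(\<lambda>x. (\<tau> *\<^sub>R Sb) *v x) = (\<lambda>x. \<tau> *\<^sub>R (Sb *v x))" by (rule ext) (simp add: scaleR_mv)
    then show ?thesis unfolding spec_norm_def s_def
      using onorm_scaleR[of "\<lambda>x. Sb *v x" \<tau>] assms(2) by simp
  qed
  have claim1: "norm (muN - tmuN) \<le> l1 * (l1 * norm (transpose Ub *v tmuN) + norm (transpose Vb *v Y))
                 / (inverse (spec_norm (\<tau> *\<^sub>R Sb)) + lK ^ 2)"
  proof -
    have den: "inverse (spec_norm (\<tau> *\<^sub>R Sb)) + lK ^ 2 = \<kappa> / \<tau>"
      unfolding snt \<kappa>_def using assms(2) sp by (simp add: field_simps)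
    have "norm e \<le> norm (P *v e) / \<kappa>" using ke kp by (simp add: le_divide_eq mult.commute)
    also have "\<dots> \<le> \<tau> * (l1 * (l1 * norm (transpose Ub *v tmuN) + norm (transpose Vb *v Y))) / \<kappa>"
      using nPe kp by (simp add: divide_right_mono)
    finally show ?thesis unfolding den e_def using assms(2) by (simp add: field_simps)
  qed
  have claim3: "spec_norm (P - tP) = \<tau> * l1 ^ 2"
  proof (rule antisym)
    show "spec_norm (P - tP) \<le> \<tau> * l1 ^ 2"
      unfolding spec_norm_def
    proof (rule onorm_bound)
      show "0 \<le> \<tau> * l1^2" using assms(2) by simp
      fix x
      have "norm ((P - tP) *v x) = \<tau> * norm (DB *v (DB *v (transpose Ub *v x)))"
        using assms(2) by (simp add: dv norm_iso[OF oUb])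
      also have "\<dots> \<le> \<tau> * (l1 * (l1 * norm x))"
        using DBle[of "DB *v (transpose Ub *v x)"] DBle[of "transpose Ub *v x"] norm_tr_le[OF oUb, of x] l10 assms(2)
        by (smt (verit) mult_left_mono)
      finally show "norm ((P - tP) *v x) \<le> \<tau> * l1 ^ 2 * norm x" by (simp add: power2_eq_square ac_simps)
    qed
  next
    define x0 where "x0 = Ub *v axis (Min UNIV) (1::real)"
    have nx0: "norm x0 = 1" unfolding x0_def by (simp add: norm_iso[OF oUb])
    have "DB *v (DB *v (transpose Ub *v x0)) = (l1 * l1) *\<^sub>R axis (Min UNIV) 1"
      unfolding x0_def ortho_cancel[OF oUb] DB_def l1_def
      by (simp add: diag_mv vec_eq_iff axis_def)
    then have "(P - tP) *v x0 = (\<tau> * l1^2) *\<^sub>R x0"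
      unfolding dv x0_def by (simp add: matrix_vector_mult_scaleR power2_eq_square)
    then have "norm ((P - tP) *v x0) / norm x0 = \<tau> * l1^2" using nx0 assms(2) by simp
    moreover have "norm ((P - tP) *v x0) / norm x0 \<le> spec_norm (P - tP)"
      unfolding spec_norm_def by (rule le_onorm) simp
    ultimately show "\<tau> * l1 ^ 2 \<le> spec_norm (P - tP)" by simp
  qed
  show ?thesis unfolding Let_def
    using claim1 claim2 claim3
    unfolding Si_def P_def UU_def tP_def SN_def tSN_def muN_def tmuN_def l1_def lK_def
    by blast
qed

end
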